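(* A function $g\in\mathcal{G}$ is slow-dropping if and only if there exists a sub-polynomial function $h$ such that for all $y\in\mathbb{N}$ and all $x<y$ we have $g(x)\le g(y)h(y)$.
   Context: $\mathcal{G}=\{g:\mathbb{Z}_{\ge0}\to\mathbb{R}: g(0)=0,\ g(1)=1,\ g(x)>0\ \forall x>0\}$. A function $f:\mathbb{R}_{\ge0}\to\mathbb{R}_{\ge0}$ is sub-polynomial if for every $\alpha>0$, $\lim_{x\to\infty}x^\alpha f(x)=\infty$ and $\lim_{x\to\infty}x^{-\alpha}f(x)=0$. $g$ is slow-dropping if for every $\alpha>0$ there is $N>0$ such that for all $x<y$ with $y\ge N$, $g(y)\ge g(x)/y^\alpha$. *)

theory Defs
  imports Complex_Main
begin

definition in_G :: "(nat \<Rightarrow> real) \<Rightarrow> bool" where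
  "in_G g \<longleftrightarrow> g 0 = 0 \<and> g 1 = 1 \<and> (\<forall>x>0. g x > 0)"

text \<open>f : [0,\<infinity>) \<rightarrow> [0,\<infinity>); values on negative reals are irrelevant.\<close>
definition sub_polynomial :: "(real \<Rightarrow> real) \<Rightarrow> bool" where
  "sub_polynomial f \<longleftrightarrow> (\<forall>x\<ge>0. f x \<ge> 0) \<and>
     (\<forall>\<alpha>>0. filterlim (\<lambda>x. x powr \<alpha> * f x) at_top at_top \<and>
             ((\<lambda>x. x powr (-\<alpha>) * f x) \<longlongrightarrow> 0) at_top)"

definition slow_dropping :: "(nat \<Rightarrow> real) \<Rightarrow> bool" where
  "slow_dropping g \<longleftrightarrow> (\<forall>\<alpha>>0. \<exists>N>0. \<forall>x y. x < y \<and> real y \<ge> N \<longrightarrow>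
      g y \<ge> g x / (real y) powr \<alpha>)"

end

theory Submission
  imports Defs "HOL-Real_Asymp.Real_Asymp"
begin

lemma lim1: "(a::real) > 0 \<Longrightarrow> ((\<lambda>x::real. x powr -a * (x+1) powr (a/2)) \<longlongrightarrow> 0) at_top"
  by real_asymp

lemma lim2: "(a::real) > 0 \<Longrightarrow> filterlim (\<lambda>x::real. x powr a) at_top at_top"
  by real_asymp

theorem proposition15:
  fixes g :: "nat \<Rightarrow> real"
  assumes "in_G g"
  shows "slow_dropping g \<longleftrightarrow>
    (\<exists>h. sub_polynomial h \<and> (\<forall>y::nat. \<forall>x<y. g x \<le> g y * h (real y)))"
proof
  have g0: "g x \<ge> 0" for x using assms unfolding in_G_def by (cases "x = 0") (auto simp: less_imp_le)
  have gpos: "x > 0 \<Longrightarrow> g x > 0" for x using assms unfolding in_G_def by auto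
  assume sd: "slow_dropping g"
  define r where "r n = Max (insert 1 ((\<lambda>x. g x / g n) ` {..<n}))" for n
  define h where "h (y::real) = r (nat \<lceil>y\<rceil>)" for y
  have r1: "r n \<ge> 1" for n unfolding r_def by (rule Max_ge) auto
  have rge: "x < n \<Longrightarrow> g x / g n \<le> r n" for x n unfolding r_def by (rule Max_ge) auto
  have hr: "h (real n) = r n" for n unfolding h_def by simp
  have rbound: "\<exists>N>0. \<forall>n. real n \<ge> N \<longrightarrow> r n \<le> real n powr a" if "a > 0" for a
  proof -
    obtain N where N: "N > 0" "\<And>x y. x < y \<Longrightarrow> real y \<ge> N \<Longrightarrow> g y \<ge> g x / (real y) powr a"
      using sd \<open>a > 0\<close> unfolding slow_dropping_def by blast
    define M where "M = max N 1"
    have "r n \<le> real n powr a" if "real n \<ge> M" for n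
    proof -
      have n1: "real n \<ge> 1" using that M_def by auto
      have np: "real n powr a \<ge> 1" using n1 \<open>a>0\<close> by (simp add: ge_one_powr_ge_zero)
      have gp: "g n > 0" using gpos n1 by auto
      show ?thesis unfolding r_def
      proof (rule Max.boundedI)
        fix z assume "z \<in> insert 1 ((\<lambda>x. g x / g n) ` {..<n})"
        then show "z \<le> real n powr a"
        proof
          assume "z = 1" then show ?thesis using np by simp
        next
          assume "z \<in> (\<lambda>x. g x / g n) ` {..<n}"
          then obtain x where x: "x < n" "z = g x / g n" by auto
          have "g x / real n powr a \<le> g n" using N(2)[OF x(1)] that M_def by auto
          then have "g x \<le> g n * real n powr a" using np by (simp add: divide_le_eq mult.commute split: if_splits)
          then show ?thesis using x gp by (simp add: divide_le_eq mult.commute)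
        qed
      qed auto
    qed
    then show ?thesis using M_def by (intro exI[of _ M]) auto
  qed
  have "sub_polynomial h"
    unfolding sub_polynomial_def
  proof (intro conjI allI impI)
    fix x :: real show "h x \<ge> 0" unfolding h_def using r1 order_trans zero_le_one by blast
  next
    fix a :: real assume a: "a > 0"
    show "filterlim (\<lambda>x. x powr a * h x) at_top at_top"
    proof (rule filterlim_at_top_mono[OF lim2[OF a]])
      show "\<forall>\<^sub>F x in at_top. x powr a \<le> x powr a * h x"
        using eventually_ge_at_top[of "0::real"]
        by eventually_elim (metis h_def r1 mult.right_neutral mult_left_mono powr_ge_zero)
    qed
  next
    fix a :: real assume a: "a > 0"
    obtain N where N: "N > 0" "\<And>n. real n \<ge> N \<Longrightarrow> r n \<le> real n powr (a/2)"
      using rbound[of "a/2"] a by auto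
    show "((\<lambda>x. x powr (-a) * h x) \<longlongrightarrow> 0) at_top"
    proof (rule tendsto_sandwich[OF _ _ tendsto_const lim1[OF a]])
      show "\<forall>\<^sub>F x in at_top. 0 \<le> x powr - a * h x"
        using eventually_ge_at_top[of "0::real"]
        by eventually_elim (metis h_def r1 order_trans zero_le_one mult_nonneg_nonneg powr_ge_zero)
      show "\<forall>\<^sub>F x in at_top. x powr - a * h x \<le> x powr - a * (x + 1) powr (a / 2)"
        using eventually_ge_at_top[of N]
      proof eventually_elim
        case (elim x)
        have xp: "x > 0" using elim N by auto
        have c: "real (nat \<lceil>x\<rceil>) = of_int \<lceil>x\<rceil>" using xp by simp
        have "real (nat \<lceil>x\<rceil>) \<ge> N" using c elim by (metis le_of_int_ceiling order_trans)
        then have "h x \<le> real (nat \<lceil>x\<rceil>) powr (a/2)" unfolding h_def using N by auto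
        also have "\<dots> \<le> (x+1) powr (a/2)"
          using c xp a of_int_ceiling_le_add_one[of x] by (intro powr_mono2) auto
        finally show ?case by (intro mult_left_mono) auto
      qed
    qed
  qed
  moreover have "\<forall>y::nat. \<forall>x<y. g x \<le> g y * h (real y)"
  proof (intro allI impI)
    fix y x :: nat assume "x < y"
    then have "g y > 0" using gpos by auto
    with rge[OF \<open>x<y\<close>] show "g x \<le> g y * h (real y)"
      by (simp add: hr divide_le_eq mult.commute)
  qed
  ultimately show "\<exists>h. sub_polynomial h \<and> (\<forall>y::nat. \<forall>x<y. g x \<le> g y * h (real y))" by blast
next
  have g0: "g x \<ge> 0" for x using assms unfolding in_G_def by (cases "x = 0") (auto simp: less_imp_le)
  assume "\<exists>h. sub_polynomial h \<and> (\<forall>y::nat. \<forall>x<y. g x \<le> g y * h (real y))"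
  then obtain h where sp: "sub_polynomial h" and hb: "\<And>y x. x < y \<Longrightarrow> g x \<le> g y * h (real y)" by blast
  show "slow_dropping g" unfolding slow_dropping_def
  proof (intro allI impI)
    fix a :: real assume a: "a > 0"
    have "((\<lambda>x. x powr (-a) * h x) \<longlongrightarrow> 0) at_top" using sp a unfolding sub_polynomial_def by blast
    then have "\<forall>\<^sub>F x in at_top. x powr (-a) * h x < 1"
      by (rule order_tendstoD) simp
    then obtain N0 where N0: "\<And>x. x \<ge> N0 \<Longrightarrow> x powr (-a) * h x < 1"
      unfolding eventually_at_top_linorder by blast
    define N where "N = max N0 1"
    have "\<forall>x y. x < y \<and> real y \<ge> N \<longrightarrow> g y \<ge> g x / (real y) powr a"
    proof (intro allI impI)
      fix x y assume xy: "x < y \<and> real y \<ge> N"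
      have y1: "real y \<ge> 1" "real y \<ge> N0" using xy N_def by auto
      have pp: "real y powr a > 0" using y1 by auto
      have "real y powr (-a) * h (real y) < 1" using N0 y1 by auto
      then have "h (real y) < real y powr a" using pp by (simp add: powr_minus field_simps)
      then have "g y * h (real y) \<le> g y * real y powr a" using g0 by (intro mult_left_mono) auto
      with hb[of x y] xy have "g x \<le> g y * real y powr a" by auto
      then show "g y \<ge> g x / (real y) powr a" using pp by (simp add: divide_le_eq)
    qed
    then show "\<exists>N>0. \<forall>x y. x < y \<and> real y \<ge> N \<longrightarrow> g y \<ge> g x / (real y) powr a"
      using N_def by (intro exI[of _ N]) auto
  qed
qed

end
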